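(* Assume Assumption A. Let $\mathscr C$ be a communicating (equivalence) class of the limiting chain $X_R$. Then for all $\eta\ne\xi\in\mathscr C$ there exists $m(\eta,\xi)\in(0,\infty)$ with $\lim_{N\to\infty}\mu_N(\eta)/\mu_N(\xi)=m(\eta,\xi)$.
   Context: Setting: $E$ is a fixed finite set; for each $N\ge1$, $(\eta^N_t)$ is a continuous-time irreducible Markov chain on $E$ with jump rates $R_N(\eta,\xi)$ and unique invariant probability measure $\mu_N$. Ordered families: a finite family of sequences of positive reals $(a^r_N)_{N\ge1}$, $r\in\mathfrak R$, is ordered if for all $r\neq s$ the sequence $\arctan(a^r_N/a^s_N)$ converges as $N\to\infty$. Assumption A: (i) for each $\eta\neq\xi$, either $R_N(\eta,\xi)=0$ for all $N$ or $R_N(\eta,\xi)>0$ for all $N$; let $\mathbb B=\{(\eta,\xi):\eta\ne\xi,R_N(\eta,\xi)>0\}$. (ii) For every $m\ge1$ the family $\prod_{(\eta,\xi)\in\mathbb B}R_N(\eta,\xi)^{k(\eta,\xi)}$, indexed by $k:\mathbb B\to\mathbb Z_+$ with $\sum k=m$, is ordered. Limiting chain: $\alpha_N^{-1}=\sum_\eta\sum_{\xi\ne\eta}R_N(\eta,\xi)$; under Assumption A, $R(\eta,\xi)=\lim_N\alpha_NR_N(\eta,\xi)\in[0,1]$ exists; $X_R$ is the Markov chain on $E$ with rates $R(\eta,\xi)$ (possibly reducible). Two states are in the same communicating class if each can be reached from the other along a path of positive $R$-rates. *)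

theory Defs
  imports "HOL-Analysis.Analysis"
begin

text \<open>A chain is given by jump rates R :: nat \<Rightarrow> 'a \<Rightarrow> 'a \<Rightarrow> real on a finite
state type 'a; only the values R N x y with N \<ge> 1 and x \<noteq> y are meaningful.\<close>

definition rate_graph :: "('a \<Rightarrow> 'a \<Rightarrow> real) \<Rightarrow> ('a \<times> 'a) set" where
  "rate_graph r = {(x, y). x \<noteq> y \<and> r x y > 0}"

definition irreducible_rates :: "('a \<Rightarrow> 'a \<Rightarrow> real) \<Rightarrow> bool" where
  "irreducible_rates r \<longleftrightarrow> (\<forall>x y. (x, y) \<in> (rate_graph r)\<^sup>*)"

definition invariant_prob :: "('a::finite \<Rightarrow> 'a \<Rightarrow> real) \<Rightarrow> ('a \<Rightarrow> real) \<Rightarrow> bool" where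
  "invariant_prob r mu \<longleftrightarrow> (\<forall>x. mu x \<ge> 0) \<and> (\<Sum>x\<in>UNIV. mu x) = 1 \<and>
     (\<forall>x. (\<Sum>y\<in>UNIV - {x}. mu y * r y x) = mu x * (\<Sum>y\<in>UNIV - {x}. r x y))"

definition ordered_family :: "'i set \<Rightarrow> ('i \<Rightarrow> nat \<Rightarrow> real) \<Rightarrow> bool" where
  "ordered_family I a \<longleftrightarrow> finite I \<and> (\<forall>r\<in>I. \<forall>N\<ge>1. a r N > 0) \<and>
     (\<forall>r\<in>I. \<forall>s\<in>I. r \<noteq> s \<longrightarrow> convergent (\<lambda>N. arctan (a r N / a s N)))"

definition bonds :: "(nat \<Rightarrow> 'a \<Rightarrow> 'a \<Rightarrow> real) \<Rightarrow> ('a \<times> 'a) set" where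
  "bonds R = {(x, y). x \<noteq> y \<and> R 1 x y > 0}"

definition assumption_A :: "(nat \<Rightarrow> 'a::finite \<Rightarrow> 'a \<Rightarrow> real) \<Rightarrow> bool" where
  "assumption_A R \<longleftrightarrow>
     (\<forall>x y. x \<noteq> y \<longrightarrow> ((\<forall>N\<ge>1. R N x y = 0) \<or> (\<forall>N\<ge>1. R N x y > 0))) \<and>
     (\<forall>m::nat\<ge>1. ordered_family
        {k :: 'a \<times> 'a \<Rightarrow> nat. (\<forall>p. p \<notin> bonds R \<longrightarrow> k p = 0) \<and> (\<Sum>p\<in>bonds R. k p) = m}
        (\<lambda>k N. \<Prod>p\<in>bonds R. R N (fst p) (snd p) ^ k p))"

definition alpha :: "(nat \<Rightarrow> 'a::finite \<Rightarrow> 'a \<Rightarrow> real) \<Rightarrow> nat \<Rightarrow> real" where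
  "alpha R N = 1 / (\<Sum>x\<in>UNIV. \<Sum>y\<in>UNIV - {x}. R N x y)"

definition limit_rates :: "(nat \<Rightarrow> 'a::finite \<Rightarrow> 'a \<Rightarrow> real) \<Rightarrow> 'a \<Rightarrow> 'a \<Rightarrow> real" where
  "limit_rates R x y = lim (\<lambda>N. alpha R N * R N x y)"

definition communicate :: "('a \<Rightarrow> 'a \<Rightarrow> real) \<Rightarrow> 'a \<Rightarrow> 'a \<Rightarrow> bool" where
  "communicate r x y \<longleftrightarrow> (x, y) \<in> (rate_graph r)\<^sup>* \<and> (y, x) \<in> (rate_graph r)\<^sup>*"

definition communicating_class :: "('a \<Rightarrow> 'a \<Rightarrow> real) \<Rightarrow> 'a set \<Rightarrow> bool" where
  "communicating_class r C \<longleftrightarrow> (\<exists>x. C = {y. communicate r x y})"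

end

theory Submission
  imports Defs
begin



definition trees :: "'a \<Rightarrow> ('a \<Rightarrow> 'a) set" where
  "trees x = {f. f x = x \<and> (\<forall>a. \<exists>n. (f^^n) a = x)}"

definition tw :: "('a::finite \<Rightarrow> 'a \<Rightarrow> real) \<Rightarrow> 'a \<Rightarrow> real" where
  "tw r x = (\<Sum>f\<in>trees x. \<Prod>a\<in>UNIV-{x}. r a (f a))"

lemma funpow_agree:
  assumes "\<forall>c. c \<noteq> z \<longrightarrow> g c = f c" "\<forall>j<n. (f^^j) a \<noteq> z"
  shows "(g^^n) a = (f^^n) a"
  using assms(2)
proof (induction n)
  case 0 then show ?case by simp
next
  case (Suc n)
  then have "(g^^n) a = (f^^n) a" by simp
  moreover have "(f^^n) a \<noteq> z" using Suc.prems by simp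
  ultimately show ?case using assms(1) by simp
qed

lemma first_hit:
  assumes "(f^^n) a = x"
  obtains m where "(f^^m) a = x" "\<forall>j<m. (f^^j) a \<noteq> x"
  using assms exists_least_iff[of "\<lambda>m. (f^^m) a = x"] by blast

lemma hit_update:
  assumes "(f^^n) a = z" "\<forall>c. c \<noteq> z \<longrightarrow> g c = f c"
  shows "\<exists>m. (g^^m) a = z"
proof -
  obtain m where m: "(f^^m) a = z" "\<forall>j<m. (f^^j) a \<noteq> z" using first_hit assms(1) by metis
  have "(g^^m) a = (f^^m) a" using funpow_agree[OF assms(2) m(2)] .
  with m show ?thesis by metis
qed

lemma no_early:
  assumes "f y2 = x" "(f^^n) x = y1" "\<forall>j<n. (f^^j) x \<noteq> y1" "j < n"
  shows "(f^^j) x \<noteq> y2"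
proof
  assume h: "(f^^j) x = y2"
  have s: "(f^^(Suc j)) x = x" using h assms(1) by simp
  have "(f^^n) x = (f^^(n - Suc j)) ((f^^(Suc j)) x)"
    using assms(4) by (metis Suc_leI comp_apply funpow_add le_add_diff_inverse2)
  also have "\<dots> = (f^^(n - Suc j)) x" using s by simp
  finally have "(f^^(n - Suc j)) x = y1" using assms(2) by simp
  moreover have "n - Suc j < n" using assms(4) by simp
  ultimately show False using assms(3) by blast
qed

lemma finite_trees[simp]: "finite (trees (x::'a::finite))"
  by simp

lemma tree_fix: "f \<in> trees y \<Longrightarrow> x \<noteq> y \<Longrightarrow> f x \<noteq> x"
proof
  assume "f \<in> trees y" "x \<noteq> y" "f x = x"
  then obtain n where "(f^^n) x = y" unfolding trees_def by blast
  moreover have "(f^^n) x = x" using \<open>f x = x\<close> by (induction n) auto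
  ultimately show False using \<open>x \<noteq> y\<close> by simp
qed


lemma tree_balance:
  fixes r :: "'a::finite \<Rightarrow> 'a \<Rightarrow> real"
  shows "(\<Sum>y\<in>UNIV-{x}. tw r y * r y x) = tw r x * (\<Sum>y\<in>UNIV-{x}. r x y)"
proof -
  define S where "S = {g::'a\<Rightarrow>'a. g x \<noteq> x \<and> (\<forall>a. \<exists>n. (g^^n) a = x)}"
  define P where "P g = (\<Prod>a\<in>UNIV. r a (g a))" for g :: "'a \<Rightarrow> 'a"
  have Pupd: "P (f(z:=v)) = r z v * (\<Prod>a\<in>UNIV-{z}. r a (f a))" for f z v
  proof -
    have "P (f(z:=v)) = r z v * (\<Prod>a\<in>UNIV-{z}. r a ((f(z:=v)) a))"
      unfolding P_def by (subst prod.remove[of UNIV z]) auto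
    also have "(\<Prod>a\<in>UNIV-{z}. r a ((f(z:=v)) a)) = (\<Prod>a\<in>UNIV-{z}. r a (f a))"
      by (rule prod.cong) auto
    finally show ?thesis .
  qed
  define h1 where "h1 p = (fst p)(x := snd p)" for p :: "('a \<Rightarrow> 'a) \<times> 'a"
  have bij1: "bij_betw h1 (trees x \<times> (UNIV-{x})) S"
    unfolding bij_betw_def
  proof (intro conjI)
    show "inj_on h1 (trees x \<times> (UNIV-{x}))"
    proof (rule inj_onI)
      fix p q assume pq: "p \<in> trees x \<times> (UNIV-{x})" "q \<in> trees x \<times> (UNIV-{x})" "h1 p = h1 q"
      obtain f1 y1 f2 y2 where pq': "p = (f1,y1)" "q = (f2,y2)" by fastforce
      have a: "f1 \<in> trees x" "y1 \<in> UNIV-{x}" "f2 \<in> trees x" "y2 \<in> UNIV-{x}"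
        "h1 (f1, y1) = h1 (f2, y2)" using pq unfolding pq' by auto
      then have e: "f1(x:=y1) = f2(x:=y2)" by (simp add: h1_def)
      then have "y1 = y2" by (metis fun_upd_same)
      moreover have "f1 = f2"
      proof
        fix a show "f1 a = f2 a"
          using e a(1,3) unfolding trees_def by (cases "a = x") (auto dest: fun_cong[where x=a])
      qed
      ultimately show "p = q" using pq' by simp
    qed
    show "h1 ` (trees x \<times> (UNIV-{x})) = S"
    proof
      show "h1 ` (trees x \<times> (UNIV-{x})) \<subseteq> S"
      proof (rule subsetI, elim imageE)
        fix g p assume gp: "g = h1 p" "p \<in> trees x \<times> (UNIV-{x})"
        obtain f y where p: "p = (f,y)" by fastforce
        have a: "f \<in> trees x" "y \<in> UNIV-{x}" using gp p by auto
        have "\<exists>n. ((f(x:=y))^^n) c = x" for c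
        proof -
          obtain n where "(f^^n) c = x" using a(1) unfolding trees_def by blast
          then show ?thesis by (rule hit_update) simp
        qed
        then show "g \<in> S" using a gp p unfolding S_def h1_def by simp
      qed
      show "S \<subseteq> h1 ` (trees x \<times> (UNIV-{x}))"
      proof
        fix g assume g: "g \<in> S"
        have "\<exists>n. ((g(x:=x))^^n) c = x" for c
        proof -
          obtain n where "(g^^n) c = x" using g unfolding S_def by blast
          then show ?thesis by (rule hit_update) simp
        qed
        then have "g(x:=x) \<in> trees x" unfolding trees_def by simp
        moreover have "g x \<in> UNIV - {x}" using g unfolding S_def by simp
        moreover have "g = h1 (g(x:=x), g x)" unfolding h1_def by simp
        ultimately show "g \<in> h1 ` (trees x \<times> (UNIV-{x}))" by blast
      qed
    qed
  qed
  have "tw r x * (\<Sum>y\<in>UNIV-{x}. r x y)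
      = (\<Sum>f\<in>trees x. \<Sum>y\<in>UNIV-{x}. (\<Prod>a\<in>UNIV-{x}. r a (f a)) * r x y)"
    unfolding tw_def by (simp add: sum_distrib_left sum_distrib_right sum.swap[of _ "trees x"])
  also have "\<dots> = (\<Sum>p\<in>trees x \<times> (UNIV-{x}). (\<Prod>a\<in>UNIV-{x}. r a (fst p a)) * r x (snd p))"
    by (simp add: sum.cartesian_product case_prod_beta)
  also have "\<dots> = (\<Sum>p\<in>trees x \<times> (UNIV-{x}). P (h1 p))"
    by (rule sum.cong) (auto simp: h1_def Pupd)
  also have "\<dots> = (\<Sum>g\<in>S. P g)"
    using sum.reindex_bij_betw[OF bij1, of P] .
  finally have rhs: "tw r x * (\<Sum>y\<in>UNIV-{x}. r x y) = (\<Sum>g\<in>S. P g)" .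
  define h2 where "h2 p = (snd p)(fst p := x)" for p :: "'a \<times> ('a \<Rightarrow> 'a)"
  have bij2: "bij_betw h2 (SIGMA y:UNIV-{x}. trees y) S"
    unfolding bij_betw_def
  proof (intro conjI)
    show "inj_on h2 (SIGMA y:UNIV-{x}. trees y)"
    proof (rule inj_onI)
      fix p q assume pq: "p \<in> (SIGMA y:UNIV-{x}. trees y)" "q \<in> (SIGMA y:UNIV-{x}. trees y)" "h2 p = h2 q"
      obtain f1 y1 f2 y2 where pq': "p = (y1,f1)" "q = (y2,f2)" by fastforce
      have a: "y1 \<in> UNIV-{x}" "f1 \<in> trees y1" "y2 \<in> UNIV-{x}" "f2 \<in> trees y2"
        "h2 (y1, f1) = h2 (y2, f2)" using pq unfolding pq' by auto
      define g where "g = f1(y1 := x)"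
      have g2: "g = f2(y2 := x)" using a(5) unfolding g_def h2_def by simp
      have yeq: "y1 = y2"
      proof (rule ccontr)
        assume ne: "y1 \<noteq> y2"
        have f1y2: "f1 y2 = x" using ne g2 g_def by (metis fun_upd_apply)
        have f2y1: "f2 y1 = x" using ne g2 g_def by (metis fun_upd_apply)
        obtain n0 where "(f1^^n0) x = y1" using a(2) unfolding trees_def by blast
        then obtain n1 where n1: "(f1^^n1) x = y1" "\<forall>j<n1. (f1^^j) x \<noteq> y1" by (rule first_hit)
        obtain n0' where "(f2^^n0') x = y2" using a(4) unfolding trees_def by blast
        then obtain n2 where n2: "(f2^^n2) x = y2" "\<forall>j<n2. (f2^^j) x \<noteq> y2" by (rule first_hit)
        have ne1: "\<forall>j<n1. (f1^^j) x \<noteq> y2" using no_early[OF f1y2 n1(1) n1(2)] by blast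
        have ne2: "\<forall>j<n2. (f2^^j) x \<noteq> y1" using no_early[OF f2y1 n2(1) n2(2)] by blast
        have ag1: "(g^^j) x = (f1^^j) x" if "j \<le> n1" for j
          by (rule funpow_agree[where z=y1]) (use that n1(2) in \<open>auto simp: g_def\<close>)
        have ag2: "(g^^j) x = (f2^^j) x" if "j \<le> n2" for j
          by (rule funpow_agree[where z=y2]) (use that n2(2) in \<open>auto simp: g2\<close>)
        show False
        proof (cases "n1 \<le> n2")
          case True
          then have "(f2^^n1) x = y1" using ag1[of n1] ag2[of n1] n1(1) by simp
          then show False using ne2 True ne n2(1) by (cases "n1 = n2") auto
        next
          case False
          then have "(f1^^n2) x = y2" using ag1[of n2] ag2[of n2] n2(1) by simp
          then show False using ne1 False by auto
        qed
      qed
      moreover have "f1 = f2"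
      proof
        fix c show "f1 c = f2 c"
        proof (cases "c = y1")
          case True then show ?thesis using a(2,4) yeq unfolding trees_def by simp
        next
          case False then show ?thesis using g2 g_def yeq by (metis fun_upd_apply)
        qed
      qed
      ultimately show "p = q" using pq' by simp
    qed
    show "h2 ` (SIGMA y:UNIV-{x}. trees y) = S"
    proof
      show "h2 ` (SIGMA y:UNIV-{x}. trees y) \<subseteq> S"
      proof (rule subsetI, elim imageE)
        fix g p assume gp: "g = h2 p" "p \<in> (SIGMA y:UNIV-{x}. trees y)"
        obtain f y where p: "p = (y,f)" by fastforce
        have a: "y \<in> UNIV-{x}" "f \<in> trees y" using gp p by auto
        have "f x \<noteq> x" using tree_fix[of f y x] a by auto
        then have gx: "(f(y:=x)) x \<noteq> x" using a by simp
        have "\<exists>n. ((f(y:=x))^^n) c = x" for c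
        proof -
          obtain n where "(f^^n) c = y" using a(2) unfolding trees_def by blast
          then have "\<exists>m. ((f(y:=x))^^m) c = y" by (rule hit_update) simp
          then obtain m where m: "((f(y:=x))^^m) c = y" by blast
          then have "((f(y:=x))^^(Suc m)) c = x" by simp
          then show ?thesis by blast
        qed
        then show "g \<in> S" using gx gp p unfolding S_def h2_def by simp
      qed
      show "S \<subseteq> h2 ` (SIGMA y:UNIV-{x}. trees y)"
      proof
        fix g assume g: "g \<in> S"
        obtain n where n: "(g^^n) (g x) = x" using g unfolding S_def by blast
        define y where "y = (g^^n) x"
        have gy: "g y = x" using n unfolding y_def by (metis comp_apply funpow_Suc_right funpow.simps(2))
        have yx: "y \<noteq> x" using gy g unfolding S_def by auto
        have "\<exists>m. ((g(y:=y))^^m) c = y" for c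
        proof -
          obtain k where k: "(g^^k) c = x" using g unfolding S_def by blast
          have "(g^^(n+k)) c = y" unfolding y_def funpow_add using k by simp
          then show ?thesis by (rule hit_update) simp
        qed
        then have "g(y:=y) \<in> trees y" unfolding trees_def by simp
        moreover have "g = h2 (y, g(y:=y))" unfolding h2_def using gy by auto
        ultimately show "g \<in> h2 ` (SIGMA y:UNIV-{x}. trees y)" using yx by blast
      qed
    qed
  qed
  have "(\<Sum>y\<in>UNIV-{x}. tw r y * r y x)
      = (\<Sum>y\<in>UNIV-{x}. \<Sum>f\<in>trees y. r y x * (\<Prod>a\<in>UNIV-{y}. r a (f a)))"
    unfolding tw_def by (simp add: sum_distrib_left sum_distrib_right mult.commute)
  also have "\<dots> = (\<Sum>p\<in>(SIGMA y:UNIV-{x}. trees y). r (fst p) x * (\<Prod>a\<in>UNIV-{fst p}. r a (snd p a)))"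
    by (subst sum.Sigma) (auto simp: case_prod_beta)
  also have "\<dots> = (\<Sum>p\<in>(SIGMA y:UNIV-{x}. trees y). P (h2 p))"
    by (rule sum.cong) (auto simp: h2_def Pupd)
  also have "\<dots> = (\<Sum>g\<in>S. P g)"
    using sum.reindex_bij_betw[OF bij2, of P] .
  finally show ?thesis using rhs by simp
qed




definition balanced :: "('a::finite \<Rightarrow> 'a \<Rightarrow> real) \<Rightarrow> ('a \<Rightarrow> real) \<Rightarrow> bool" where
  "balanced r v \<longleftrightarrow> (\<forall>x. (\<Sum>y\<in>UNIV - {x}. v y * r y x) = v x * (\<Sum>y\<in>UNIV - {x}. r x y))"

lemma propagate:
  fixes r :: "'a::finite \<Rightarrow> 'a \<Rightarrow> real"
  assumes nn: "\<And>u v. u \<noteq> v \<Longrightarrow> r u v \<ge> 0" and vnn: "\<And>u. v u \<ge> 0"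
    and bal: "balanced r v" and irr: "irreducible_rates r" and z: "v x0 = 0"
  shows "v y = 0"
proof -
  have "(y, x0) \<in> (rate_graph r)\<^sup>*" using irr unfolding irreducible_rates_def by blast
  then show ?thesis
  proof (induction rule: converse_rtrancl_induct)
    case base then show ?case using z .
  next
    case (step y z)
    then have yz: "y \<noteq> z" "r y z > 0" unfolding rate_graph_def by auto
    have "(\<Sum>u\<in>UNIV - {z}. v u * r u z) = 0" using bal step.IH unfolding balanced_def by simp
    moreover have "\<forall>u\<in>UNIV-{z}. v u * r u z \<ge> 0" using nn vnn by simp
    ultimately have "\<forall>u\<in>UNIV-{z}. v u * r u z = 0" using sum_nonneg_eq_0_iff[of "UNIV-{z}" "\<lambda>u. v u * r u z"] by simp
    then have "v y * r y z = 0" using yz(1) by (meson DiffI UNIV_I singletonD)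
    then have "v y = 0 \<or> r y z = 0" by simp
    then show ?case using yz by simp
  qed
qed

lemma ratio_eq:
  fixes r :: "'a::finite \<Rightarrow> 'a \<Rightarrow> real"
  assumes nn: "\<And>u v. u \<noteq> v \<Longrightarrow> r u v \<ge> 0"
    and irr: "irreducible_rates r" and inv: "invariant_prob r mu"
    and wnn: "\<And>u. w u \<ge> 0" and wbal: "balanced r w" and wpos: "w \<xi> > 0"
  shows "mu \<eta> / mu \<xi> = w \<eta> / w \<xi>" and "\<forall>x. mu x > 0"
proof -
  have munn: "\<And>u. mu u \<ge> 0" and musum: "(\<Sum>x\<in>UNIV. mu x) = 1" and mubal: "balanced r mu"
    using inv unfolding invariant_prob_def balanced_def by auto
  have mupos: "mu x > 0" for x
  proof (rule ccontr)
    assume "\<not> mu x > 0"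
    then have "mu x = 0" using munn[of x] by simp
    then have "\<forall>y. mu y = 0" using propagate[OF nn munn mubal irr] by blast
    then show False using musum by simp
  qed
  then show "\<forall>x. mu x > 0" by blast
  define c where "c = Min (range (\<lambda>x. w x / mu x))"
  have "c \<in> range (\<lambda>x. w x / mu x)" unfolding c_def by (rule Min_in) auto
  then obtain x0 where x0: "c = w x0 / mu x0" by blast
  have cle: "c \<le> w x / mu x" for x unfolding c_def by (rule Min_le) auto
  define v where "v x = w x - c * mu x" for x
  have vnn: "v x \<ge> 0" for x
    using cle[of x] mupos[of x] unfolding v_def by (simp add: field_simps)
  have v0: "v x0 = 0" using x0 mupos[of x0] unfolding v_def by simp
  have vbal: "balanced r v"
    unfolding balanced_def
  proof
    fix x
    have "(\<Sum>y\<in>UNIV - {x}. v y * r y x) = (\<Sum>y\<in>UNIV - {x}. w y * r y x) - c * (\<Sum>y\<in>UNIV - {x}. mu y * r y x)"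
      unfolding v_def by (simp add: algebra_simps sum_subtractf sum_distrib_left)
    also have "\<dots> = v x * (\<Sum>y\<in>UNIV - {x}. r x y)"
      using wbal mubal unfolding balanced_def v_def by (simp add: algebra_simps)
    finally show "(\<Sum>y\<in>UNIV - {x}. v y * r y x) = v x * (\<Sum>y\<in>UNIV - {x}. r x y)" .
  qed
  have "v y = 0" for y using propagate[OF nn vnn vbal irr v0] .
  then have weq: "w y = c * mu y" for y unfolding v_def by (metis eq_iff_diff_eq_0)
  have "c \<noteq> 0" using wpos weq[of \<xi>] by auto
  then show "mu \<eta> / mu \<xi> = w \<eta> / w \<xi>" using weq by simp
qed

lemma crossing:
  assumes "(a,b) \<in> G\<^sup>*" "a \<notin> D" "b \<in> D"
  shows "\<exists>u v. (u,v) \<in> G \<and> u \<notin> D \<and> v \<in> D"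
  using assms
proof (induction rule: rtrancl_induct)
  case base then show ?case by simp
next
  case (step y z)
  then show ?case by (cases "y \<in> D") auto
qed

lemma stay_in: "(\<forall>a\<in>D. f a \<in> D) \<Longrightarrow> a \<in> D \<Longrightarrow> (f^^j) a \<in> D"
  by (induction j) auto

lemma tree_exists:
  fixes x :: "'a::finite"
  assumes reach: "\<forall>a. (a,x) \<in> G\<^sup>*"
  shows "\<exists>f\<in>trees x. \<forall>a. a \<noteq> x \<longrightarrow> (a, f a) \<in> G"
proof -
  define Q where "Q D f \<longleftrightarrow> x \<in> D \<and> f x = x \<and> (\<forall>a\<in>D. \<exists>k. (f^^k) a = x) \<and> (\<forall>a\<in>D. f a \<in> D)
      \<and> (\<forall>a\<in>D. a \<noteq> x \<longrightarrow> (a, f a) \<in> G)" for D and f :: "'a \<Rightarrow> 'a"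
  have "\<exists>D f. Q D f \<and> (card D \<ge> Suc n \<or> D = UNIV)" for n
  proof (induction n)
    case 0
    have "Q {x} (\<lambda>a. a)" unfolding Q_def by (auto intro: exI[of _ 0])
    moreover have "card {x} \<ge> Suc 0" by simp
    ultimately show ?case by metis
  next
    case (Suc n)
    then obtain D f where Df: "Q D f" "card D \<ge> Suc n \<or> D = UNIV" by blast
    show ?case
    proof (cases "D = UNIV")
      case True then show ?thesis using Df by blast
    next
      case False
      then obtain a0 where "a0 \<notin> D" by blast
      moreover have "x \<in> D" using Df unfolding Q_def by simp
      ultimately have "\<exists>u v. (u,v) \<in> G \<and> u \<notin> D \<and> v \<in> D" using crossing[OF reach[rule_format, of a0]] by blast
      then obtain u v where uv: "(u,v) \<in> G" "u \<notin> D" "v \<in> D" by blast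
      define f' where "f' = f(u := v)"
      define D' where "D' = insert u D"
      have ux: "u \<noteq> x" using uv \<open>x \<in> D\<close> by auto
      have inv: "\<forall>a\<in>D. f a \<in> D" using Df unfolding Q_def by simp
      have reachD: "\<exists>k. (f'^^k) a = x" if "a \<in> D" for a
      proof -
        have "\<forall>a\<in>D. \<exists>k. (f^^k) a = x" using Df(1) unfolding Q_def by simp
        then have "\<exists>k. (f^^k) a = x" using that by (rule bspec)
        then obtain k where k: "(f^^k) a = x" by (rule exE)
        have "\<forall>j<k. (f^^j) a \<noteq> u"
        proof (intro allI impI)
          fix j assume "j < k"
          have "(f^^j) a \<in> D" by (rule stay_in[OF inv that])
          then show "(f^^j) a \<noteq> u" using uv(2) by auto
        qed
        then have "(f'^^k) a = (f^^k) a" by (intro funpow_agree[where z=u]) (auto simp: f'_def)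
        then show ?thesis using k by metis
      qed
      have "\<exists>k. (f'^^k) u = x"
      proof -
        obtain k where "(f'^^k) v = x" using reachD uv by blast
        then have "(f'^^(Suc k)) u = x" by (simp only: funpow_Suc_right comp_apply) (simp add: f'_def)
        then show ?thesis by blast
      qed
      then have r': "\<forall>a\<in>D'. \<exists>k. (f'^^k) a = x" using reachD unfolding D'_def by blast
      have QD: "x \<in> D" "f x = x" "\<forall>a\<in>D. a \<noteq> x \<longrightarrow> (a, f a) \<in> G" using Df unfolding Q_def by auto
      have "f' x = x" using QD ux unfolding f'_def by simp
      moreover have "\<forall>a\<in>D'. f' a \<in> D'" using inv uv unfolding D'_def f'_def by auto
      moreover have "\<forall>a\<in>D'. a \<noteq> x \<longrightarrow> (a, f' a) \<in> G" using QD uv unfolding D'_def f'_def by auto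
      moreover have "x \<in> D'" using QD unfolding D'_def by simp
      ultimately have "Q D' f'" using r' unfolding Q_def by blast
      moreover have "card D' = Suc (card D)" unfolding D'_def using uv by simp
      ultimately show ?thesis using Df False by (intro exI[of _ D'] exI[of _ f']) auto
    qed
  qed
  then obtain D f where Df: "Q D f" "card D \<ge> Suc (CARD('a)) \<or> D = UNIV" by blast
  have "card D \<le> CARD('a)" by (simp add: card_mono)
  then have "D = UNIV" using Df by auto
  then have "f \<in> trees x" "\<forall>a. a \<noteq> x \<longrightarrow> (a, f a) \<in> G" using Df(1) unfolding Q_def trees_def by auto
  then show ?thesis by blast
qed




lemma conv_from_arctan:
  fixes x :: "nat \<Rightarrow> real"
  assumes "(\<lambda>N. arctan (x N)) \<longlonglongrightarrow> \<theta>" "\<theta> < pi/2" "\<theta> > -(pi/2)"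
  shows "x \<longlonglongrightarrow> tan \<theta>"
proof -
  have "cos \<theta> \<noteq> 0" using cos_gt_zero_pi[OF assms(3) assms(2)] by simp
  then have "(\<lambda>N. tan (arctan (x N))) \<longlonglongrightarrow> tan \<theta>"
    using isCont_tendsto_compose[OF isCont_tan assms(1)] by simp
  then show ?thesis by (simp add: tan_arctan)
qed

lemma ord_pos: "ordered_family I a \<Longrightarrow> i \<in> I \<Longrightarrow> N \<ge> 1 \<Longrightarrow> a i N > 0"
  unfolding ordered_family_def by blast

lemma ev_ge1: "eventually (\<lambda>N::nat. N \<ge> 1) sequentially"
  by (rule eventually_ge_at_top)

lemma ev_pos: "ordered_family I a \<Longrightarrow> i \<in> I \<Longrightarrow> eventually (\<lambda>N. a i N > 0) sequentially"
  using ev_ge1 by (rule eventually_mono) (rule ord_pos)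

lemma ord_self:
  assumes "ordered_family I a" "i \<in> I"
  shows "(\<lambda>N. a i N / a i N) \<longlonglongrightarrow> 1"
proof -
  have "eventually (\<lambda>N. 1 = a i N / a i N) sequentially"
    using ev_pos[OF assms] by eventually_elim simp
  then show ?thesis by (rule Lim_transform_eventually[OF tendsto_const])
qed

lemma ord_total:
  assumes ord: "ordered_family I a" and ij: "i \<in> I" "j \<in> I"
  shows "convergent (\<lambda>N. a i N / a j N) \<or> convergent (\<lambda>N. a j N / a i N)"
proof (cases "i = j")
  case True then show ?thesis using ord_self[OF ord ij(1)] by (auto simp: convergent_def)
next
  case False
  obtain t1 where t1: "(\<lambda>N. arctan (a i N / a j N)) \<longlonglongrightarrow> t1"
    using ord ij False unfolding ordered_family_def convergent_def by blast
  obtain t2 where t2: "(\<lambda>N. arctan (a j N / a i N)) \<longlonglongrightarrow> t2"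
    using ord ij False unfolding ordered_family_def convergent_def by metis
  have ev: "eventually (\<lambda>N. a i N > 0 \<and> a j N > 0) sequentially"
    using ev_pos[OF ord ij(1)] ev_pos[OF ord ij(2)] by eventually_elim simp
  have e1: "eventually (\<lambda>N. arctan (a i N / a j N) \<ge> 0) sequentially"
    using ev by eventually_elim (simp add: arctan_less_zero_iff)
  have e2: "eventually (\<lambda>N. arctan (a j N / a i N) \<ge> 0) sequentially"
    using ev by eventually_elim (simp add: arctan_less_zero_iff)
  have t1n: "t1 \<ge> 0" by (rule tendsto_lowerbound[OF t1 e1]) simp
  have t2n: "t2 \<ge> 0" by (rule tendsto_lowerbound[OF t2 e2]) simp
  have e3: "eventually (\<lambda>N. pi/2 - arctan (a i N / a j N) = arctan (a j N / a i N)) sequentially"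
    using ev
  proof eventually_elim
    case (elim N)
    have "a i N / a j N \<noteq> 0" "a i N / a j N > 0" using elim by simp_all
    then show ?case using arctan_inverse[of "a i N / a j N"] by simp
  qed
  have "(\<lambda>N. pi/2 - arctan (a i N / a j N)) \<longlonglongrightarrow> pi/2 - t1"
    by (intro tendsto_intros t1)
  then have "(\<lambda>N. arctan (a j N / a i N)) \<longlonglongrightarrow> pi/2 - t1"
    by (rule Lim_transform_eventually[OF _ e3])
  then have t12: "t2 = pi/2 - t1" using t2 LIMSEQ_unique by blast
  show ?thesis
  proof (cases "t1 < pi/2")
    case True
    have "(\<lambda>N. a i N / a j N) \<longlonglongrightarrow> tan t1"
      by (rule conv_from_arctan[OF t1 True]) (use t1n pi_gt_zero in linarith)
    then show ?thesis by (auto simp: convergent_def)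
  next
    case False
    have "t2 < pi/2" "t2 > -(pi/2)" using False t12 t2n pi_gt_zero by linarith+
    then have "(\<lambda>N. a j N / a i N) \<longlonglongrightarrow> tan t2" by (rule conv_from_arctan[OF t2])
    then show ?thesis by (auto simp: convergent_def)
  qed
qed

lemma ord_trans:
  assumes ord: "ordered_family I a" and j: "j \<in> I"
    and c1: "convergent (\<lambda>N. a i N / a j N)" and c2: "convergent (\<lambda>N. a j N / a k N)"
  shows "convergent (\<lambda>N. a i N / a k N)"
proof -
  obtain L1 L2 where L1: "(\<lambda>N. a i N / a j N) \<longlonglongrightarrow> L1" and L2: "(\<lambda>N. a j N / a k N) \<longlonglongrightarrow> L2"
    using c1 c2 unfolding convergent_def by blast
  have "(\<lambda>N. a i N / a j N * (a j N / a k N)) \<longlonglongrightarrow> L1 * L2" by (rule tendsto_mult[OF L1 L2])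
  moreover have "eventually (\<lambda>N. a i N / a j N * (a j N / a k N) = a i N / a k N) sequentially"
    using ev_pos[OF ord j] by eventually_elim simp
  ultimately have "(\<lambda>N. a i N / a k N) \<longlonglongrightarrow> L1 * L2" by (rule Lim_transform_eventually)
  then show ?thesis by (auto simp: convergent_def)
qed

lemma ord_max:
  assumes ord: "ordered_family I a" and S: "finite S" "S \<noteq> {}" "S \<subseteq> I"
  shows "\<exists>k\<in>S. \<forall>j\<in>S. convergent (\<lambda>N. a j N / a k N)"
  using S
proof (induction S rule: finite_ne_induct)
  case (singleton x)
  then show ?case using ord_self[OF ord] by (auto simp: convergent_def)
next
  case (insert x F)
  then obtain k where k: "k \<in> F" "\<forall>j\<in>F. convergent (\<lambda>N. a j N / a k N)" by auto
  have xI: "x \<in> I" and kI: "k \<in> I" using insert k by auto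
  show ?case
  proof (cases "convergent (\<lambda>N. a x N / a k N)")
    case True then show ?thesis using k by auto
  next
    case False
    then have ck: "convergent (\<lambda>N. a k N / a x N)" using ord_total[OF ord xI kI] by blast
    have "\<forall>j\<in>insert x F. convergent (\<lambda>N. a j N / a x N)"
    proof
      fix j assume "j \<in> insert x F"
      then show "convergent (\<lambda>N. a j N / a x N)"
      proof
        assume "j = x" then show ?thesis using ord_self[OF ord xI] by (auto simp: convergent_def)
      next
        assume "j \<in> F" then show ?thesis using ord_trans[OF ord kI _ ck] k by blast
      qed
    qed
    then show ?thesis by blast
  qed
qed


lemma ord_sum_limit:
  fixes \<phi> \<psi> :: "'b \<Rightarrow> 'i" and a :: "'i \<Rightarrow> nat \<Rightarrow> real"
  assumes ord: "ordered_family I a" and fin: "finite A" "finite B" and sub: "\<phi> ` A \<subseteq> I" "\<psi> ` B \<subseteq> I"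
    and ne: "A \<noteq> {} \<or> B \<noteq> {}"
    and b1: "c1 > 0" "eventually (\<lambda>N. (\<Sum>f\<in>A. a (\<phi> f) N) \<ge> c1 * (\<Sum>f\<in>B. a (\<psi> f) N)) sequentially"
    and b2: "c2 > 0" "eventually (\<lambda>N. (\<Sum>f\<in>B. a (\<psi> f) N) \<ge> c2 * (\<Sum>f\<in>A. a (\<phi> f) N)) sequentially"
  shows "\<exists>m>0. (\<lambda>N. (\<Sum>f\<in>A. a (\<phi> f) N) / (\<Sum>f\<in>B. a (\<psi> f) N)) \<longlonglongrightarrow> m"
proof -
  define S where "S = \<phi> ` A \<union> \<psi> ` B"
  have S: "finite S" "S \<noteq> {}" "S \<subseteq> I" using fin ne sub unfolding S_def by auto
  obtain k where k: "k \<in> S" "\<forall>j\<in>S. convergent (\<lambda>N. a j N / a k N)" using ord_max[OF ord S] by blast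
  define L where "L j = lim (\<lambda>N. a j N / a k N)" for j
  have L: "(\<lambda>N. a j N / a k N) \<longlonglongrightarrow> L j" if "j \<in> S" for j
    using k(2) that unfolding L_def by (simp add: convergent_LIMSEQ_iff)
  have kI: "k \<in> I" using k S by auto
  have evk: "eventually (\<lambda>N. a k N > 0) sequentially" by (rule ev_pos[OF ord kI])
  have Lnn: "L j \<ge> 0" if "j \<in> S" for j
  proof (rule tendsto_lowerbound[OF L[OF that]])
    have "j \<in> I" using that S by auto
    show "eventually (\<lambda>N. a j N / a k N \<ge> 0) sequentially"
      using ev_pos[OF ord \<open>j \<in> I\<close>] evk by eventually_elim simp
  qed simp
  have Lk: "L k = 1" using L[OF k(1)] ord_self[OF ord kI] LIMSEQ_unique by blast
  define p where "p = (\<Sum>f\<in>A. L (\<phi> f))"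
  define q where "q = (\<Sum>f\<in>B. L (\<psi> f))"
  have P: "(\<lambda>N. (\<Sum>f\<in>A. a (\<phi> f) N) / a k N) \<longlonglongrightarrow> p"
    unfolding p_def sum_divide_distrib by (rule tendsto_sum) (rule L, auto simp: S_def)
  have Q: "(\<lambda>N. (\<Sum>f\<in>B. a (\<psi> f) N) / a k N) \<longlonglongrightarrow> q"
    unfolding q_def sum_divide_distrib by (rule tendsto_sum) (rule L, auto simp: S_def)
  have pnn: "p \<ge> 0" unfolding p_def by (rule sum_nonneg) (rule Lnn, auto simp: S_def)
  have qnn: "q \<ge> 0" unfolding q_def by (rule sum_nonneg) (rule Lnn, auto simp: S_def)
  have pq: "p \<ge> c1 * q"
  proof (rule tendsto_le[OF _ P tendsto_mult[OF tendsto_const Q]])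
    show "eventually (\<lambda>N. c1 * ((\<Sum>f\<in>B. a (\<psi> f) N) / a k N) \<le> (\<Sum>f\<in>A. a (\<phi> f) N) / a k N) sequentially"
      using b1(2) evk by eventually_elim (simp add: divide_right_mono)
  qed simp
  have qp: "q \<ge> c2 * p"
  proof (rule tendsto_le[OF _ Q tendsto_mult[OF tendsto_const P]])
    show "eventually (\<lambda>N. c2 * ((\<Sum>f\<in>A. a (\<phi> f) N) / a k N) \<le> (\<Sum>f\<in>B. a (\<psi> f) N) / a k N) sequentially"
      using b2(2) evk by eventually_elim (simp add: divide_right_mono)
  qed simp
  have "p \<ge> 1 \<or> q \<ge> 1"
  proof (cases "k \<in> \<phi> ` A")
    case True
    then obtain f0 where f0: "f0 \<in> A" "\<phi> f0 = k" by blast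
    have "L (\<phi> f0) \<le> p" unfolding p_def
      by (rule member_le_sum) (use f0 fin in \<open>auto intro: Lnn simp: S_def\<close>)
    then show ?thesis using Lk f0 by simp
  next
    case False
    then obtain f0 where f0: "f0 \<in> B" "\<psi> f0 = k" using k(1) unfolding S_def by blast
    have "L (\<psi> f0) \<le> q" unfolding q_def
      by (rule member_le_sum) (use f0 fin in \<open>auto intro: Lnn simp: S_def\<close>)
    then show ?thesis using Lk f0 by simp
  qed
  then have ppos: "p > 0" and qpos: "q > 0"
    using pq qp b1(1) b2(1) pnn qnn
    by (smt (verit) mult_pos_pos)+
  have "(\<lambda>N. ((\<Sum>f\<in>A. a (\<phi> f) N) / a k N) / ((\<Sum>f\<in>B. a (\<psi> f) N) / a k N)) \<longlonglongrightarrow> p / q"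
    by (rule tendsto_divide[OF P Q]) (use qpos in simp)
  moreover have "eventually (\<lambda>N. ((\<Sum>f\<in>A. a (\<phi> f) N) / a k N) / ((\<Sum>f\<in>B. a (\<psi> f) N) / a k N)
      = (\<Sum>f\<in>A. a (\<phi> f) N) / (\<Sum>f\<in>B. a (\<psi> f) N)) sequentially"
    using evk by eventually_elim simp
  ultimately have "(\<lambda>N. (\<Sum>f\<in>A. a (\<phi> f) N) / (\<Sum>f\<in>B. a (\<psi> f) N)) \<longlonglongrightarrow> p / q"
    by (rule Lim_transform_eventually)
  then show ?thesis using ppos qpos by (intro exI[of _ "p/q"]) simp
qed



context
  fixes R :: "nat \<Rightarrow> 'a::finite \<Rightarrow> 'a \<Rightarrow> real" and mu :: "nat \<Rightarrow> 'a \<Rightarrow> real"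
  assumes nonneg: "\<And>N x y. N \<ge> 1 \<Longrightarrow> x \<noteq> y \<Longrightarrow> R N x y \<ge> 0"
    and irred: "\<And>N. N \<ge> 1 \<Longrightarrow> irreducible_rates (R N)"
    and inv: "\<And>N. N \<ge> 1 \<Longrightarrow> invariant_prob (R N) (mu N)"
    and A: "assumption_A R"
begin

lemma A1: "x \<noteq> y \<Longrightarrow> (\<forall>N\<ge>1. R N x y = 0) \<or> (\<forall>N\<ge>1. R N x y > 0)"
  using A unfolding assumption_A_def by blast

lemma nonbond_zero: "N \<ge> 1 \<Longrightarrow> x \<noteq> y \<Longrightarrow> (x,y) \<notin> bonds R \<Longrightarrow> R N x y = 0"
  using A1[of x y] unfolding bonds_def by auto

lemma bond_pos: "N \<ge> 1 \<Longrightarrow> (x,y) \<in> bonds R \<Longrightarrow> R N x y > 0"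
  using A1[of x y] unfolding bonds_def by auto

definition Kset :: "nat \<Rightarrow> ('a \<times> 'a \<Rightarrow> nat) set" where
  "Kset m = {k. (\<forall>p. p \<notin> bonds R \<longrightarrow> k p = 0) \<and> (\<Sum>p\<in>bonds R. k p) = m}"

definition Mon :: "('a \<times> 'a \<Rightarrow> nat) \<Rightarrow> nat \<Rightarrow> real" where
  "Mon k N = (\<Prod>p\<in>bonds R. R N (fst p) (snd p) ^ k p)"

lemma ordK: "m \<ge> 1 \<Longrightarrow> ordered_family (Kset m) Mon"
  using A unfolding assumption_A_def Kset_def Mon_def by blast

definition Tot :: "nat \<Rightarrow> real" where
  "Tot N = (\<Sum>x\<in>UNIV. \<Sum>y\<in>UNIV - {x}. R N x y)"

lemma Tot_bonds: "N \<ge> 1 \<Longrightarrow> Tot N = (\<Sum>p\<in>bonds R. R N (fst p) (snd p))"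
proof -
  assume N: "N \<ge> 1"
  have "Tot N = (\<Sum>p\<in>(SIGMA x:UNIV. UNIV - {x}). R N (fst p) (snd p))"
    unfolding Tot_def by (subst sum.Sigma) (auto simp: case_prod_beta)
  also have "\<dots> = (\<Sum>p\<in>bonds R. R N (fst p) (snd p))"
  proof (rule sum.mono_neutral_right)
    show "bonds R \<subseteq> (SIGMA x:UNIV. UNIV - {x})" unfolding bonds_def by auto
    show "\<forall>p\<in>(SIGMA x:UNIV. UNIV - {x}) - bonds R. R N (fst p) (snd p) = 0"
    proof
      fix p assume p: "p \<in> (SIGMA x:UNIV. UNIV - {x}) - bonds R"
      then have "fst p \<noteq> snd p" "(fst p, snd p) \<notin> bonds R" by auto
      then show "R N (fst p) (snd p) = 0" by (rule nonbond_zero[OF N])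
    qed
  qed simp
  finally show ?thesis .
qed

lemma alpha_Tot: "alpha R N = 1 / Tot N"
  unfolding alpha_def Tot_def by simp

definition ind :: "'a \<times> 'a \<Rightarrow> ('a \<times> 'a \<Rightarrow> nat)" where
  "ind b = (\<lambda>p. if p = b then 1 else 0)"

lemma ind_K: "b \<in> bonds R \<Longrightarrow> ind b \<in> Kset 1"
  unfolding Kset_def ind_def by (auto simp: sum.delta)

lemma Mon_ind: "b \<in> bonds R \<Longrightarrow> Mon (ind b) N = R N (fst b) (snd b)"
proof -
  assume b: "b \<in> bonds R"
  have "Mon (ind b) N = (\<Prod>p\<in>bonds R. if p = b then R N (fst p) (snd p) else 1)"
    unfolding Mon_def ind_def by (rule prod.cong) auto
  also have "\<dots> = R N (fst b) (snd b)" using b by (simp add: prod.delta)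
  finally show ?thesis .
qed

lemma alpha_conv:
  assumes yz: "(y,z) \<in> bonds R"
  shows "convergent (\<lambda>N. alpha R N * R N y z)"
proof -
  have ord: "ordered_family (Kset 1) Mon" by (rule ordK) simp
  define S where "S = ind ` bonds R"
  have S: "finite S" "S \<noteq> {}" "S \<subseteq> Kset 1" using yz ind_K unfolding S_def by auto
  obtain k where k: "k \<in> S" "\<forall>j\<in>S. convergent (\<lambda>N. Mon j N / Mon k N)" using ord_max[OF ord S] by blast
  obtain b0 where b0: "b0 \<in> bonds R" "k = ind b0" using k(1) unfolding S_def by blast
  define L where "L j = lim (\<lambda>N. Mon j N / Mon k N)" for j
  have L: "(\<lambda>N. R N (fst b) (snd b) / R N (fst b0) (snd b0)) \<longlonglongrightarrow> L (ind b)" if "b \<in> bonds R" for b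
  proof -
    have "(\<lambda>N. Mon (ind b) N / Mon k N) \<longlonglongrightarrow> L (ind b)"
      using k(2) that unfolding L_def S_def by (simp add: convergent_LIMSEQ_iff)
    then show ?thesis using that b0 by (simp add: Mon_ind)
  qed
  have ev0: "eventually (\<lambda>N. R N (fst b0) (snd b0) > 0) sequentially"
    using ev_ge1 by (rule eventually_mono) (rule bond_pos[OF _ ], simp_all add: b0)
  have Lnn: "L (ind b) \<ge> 0" if "b \<in> bonds R" for b
  proof (rule tendsto_lowerbound[OF L[OF that]])
    show "eventually (\<lambda>N. R N (fst b) (snd b) / R N (fst b0) (snd b0) \<ge> 0) sequentially"
      using ev_ge1 ev0 by eventually_elim (use bond_pos that in \<open>auto intro!: divide_nonneg_pos less_imp_le\<close>)
  qed simp
  have L0: "L (ind b0) = 1"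
  proof -
    have "eventually (\<lambda>N. 1 = R N (fst b0) (snd b0) / R N (fst b0) (snd b0)) sequentially"
      using ev0 by eventually_elim simp
    then have "(\<lambda>N. R N (fst b0) (snd b0) / R N (fst b0) (snd b0)) \<longlonglongrightarrow> 1"
      by (rule Lim_transform_eventually[OF tendsto_const])
    then show ?thesis using L[OF b0(1)] LIMSEQ_unique by blast
  qed
  define q where "q = (\<Sum>b\<in>bonds R. L (ind b))"
  have q1: "q \<ge> 1"
  proof -
    have "L (ind b0) \<le> q" unfolding q_def by (rule member_le_sum) (use b0 Lnn in auto)
    then show ?thesis using L0 by simp
  qed
  have Q: "(\<lambda>N. (\<Sum>b\<in>bonds R. R N (fst b) (snd b)) / R N (fst b0) (snd b0)) \<longlonglongrightarrow> q"
    unfolding q_def sum_divide_distrib by (rule tendsto_sum) (rule L)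
  have "(\<lambda>N. (R N y z / R N (fst b0) (snd b0)) / ((\<Sum>b\<in>bonds R. R N (fst b) (snd b)) / R N (fst b0) (snd b0)))
        \<longlonglongrightarrow> L (ind (y,z)) / q"
    by (rule tendsto_divide[OF L[OF yz, simplified] Q]) (use q1 in simp)
  moreover have "eventually (\<lambda>N. (R N y z / R N (fst b0) (snd b0)) / ((\<Sum>b\<in>bonds R. R N (fst b) (snd b)) / R N (fst b0) (snd b0))
        = alpha R N * R N y z) sequentially"
    using ev_ge1 ev0 by eventually_elim (simp add: alpha_Tot Tot_bonds)
  ultimately have "(\<lambda>N. alpha R N * R N y z) \<longlonglongrightarrow> L (ind (y,z)) / q"
    by (rule Lim_transform_eventually)
  then show ?thesis by (auto simp: convergent_def)
qed

lemma limit_rates_pos: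
  assumes "y \<noteq> z" "limit_rates R y z > 0"
  shows "(y,z) \<in> bonds R" and "(\<lambda>N. alpha R N * R N y z) \<longlonglongrightarrow> limit_rates R y z"
proof -
  show b: "(y,z) \<in> bonds R"
  proof (rule ccontr)
    assume nb: "(y,z) \<notin> bonds R"
    have "eventually (\<lambda>N. 0 = alpha R N * R N y z) sequentially"
      using ev_ge1 by eventually_elim (use nonbond_zero[OF _ assms(1) nb] in simp)
    then have "(\<lambda>N. alpha R N * R N y z) \<longlonglongrightarrow> 0"
      by (rule Lim_transform_eventually[OF tendsto_const])
    then have "limit_rates R y z = 0" unfolding limit_rates_def by (rule limI)
    then show False using assms by simp
  qed
  show "(\<lambda>N. alpha R N * R N y z) \<longlonglongrightarrow> limit_rates R y z"
    using alpha_conv[OF b] unfolding limit_rates_def by (simp add: convergent_LIMSEQ_iff)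
qed

lemma edge_bound:
  assumes "(y,z) \<in> rate_graph (limit_rates R)"
  shows "\<exists>c>0. eventually (\<lambda>N. mu N z \<ge> c * mu N y) sequentially"
proof -
  have yz: "y \<noteq> z" and r: "limit_rates R y z > 0" using assms unfolding rate_graph_def by auto
  define r0 where "r0 = limit_rates R y z"
  have lim: "(\<lambda>N. alpha R N * R N y z) \<longlonglongrightarrow> r0" using limit_rates_pos(2)[OF yz r] unfolding r0_def .
  have "eventually (\<lambda>N. alpha R N * R N y z > r0/2) sequentially"
    using order_tendstoD(1)[OF lim, of "r0/2"] r unfolding r0_def by simp
  then have "eventually (\<lambda>N. mu N z \<ge> (r0/2) * mu N y) sequentially"
    using ev_ge1
  proof eventually_elim
    case (elim N)
    have bal: "(\<Sum>u\<in>UNIV - {z}. mu N u * R N u z) = mu N z * (\<Sum>u\<in>UNIV - {z}. R N z u)"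
      and munn: "\<And>u. mu N u \<ge> 0" using inv[OF elim(2)] unfolding invariant_prob_def by auto
    have Tpos: "Tot N > 0"
    proof (rule ccontr)
      assume "\<not> Tot N > 0"
      then have "alpha R N \<le> 0" unfolding alpha_Tot by simp
      moreover have "R N y z \<ge> 0" using nonneg[OF elim(2) yz] .
      ultimately have "alpha R N * R N y z \<le> 0" by (simp add: mult_nonpos_nonneg)
      then show False using elim(1) r unfolding r0_def by simp
    qed
    have t1: "mu N y * R N y z \<le> (\<Sum>u\<in>UNIV - {z}. mu N u * R N u z)"
      by (rule member_le_sum) (use yz munn nonneg[OF elim(2)] in auto)
    have "(\<Sum>u\<in>UNIV - {z}. R N z u) \<le> Tot N"
      unfolding Tot_def
      by (rule member_le_sum[where f="\<lambda>x. \<Sum>u\<in>UNIV - {x}. R N x u" and i=z]) (auto intro!: sum_nonneg nonneg[OF elim(2)])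
    then have "mu N z * (\<Sum>u\<in>UNIV - {z}. R N z u) \<le> mu N z * Tot N" using munn by (simp add: mult_left_mono)
    then have "mu N y * R N y z \<le> mu N z * Tot N" using t1 bal by simp
    then have "mu N y * R N y z / Tot N \<le> mu N z" using Tpos by (simp add: divide_le_eq)
    moreover have "mu N y * R N y z / Tot N = mu N y * (alpha R N * R N y z)" unfolding alpha_Tot by simp
    moreover have "(r0/2) * mu N y \<le> mu N y * (alpha R N * R N y z)"
    proof -
      have "(r0/2) * mu N y \<le> (alpha R N * R N y z) * mu N y"
        using elim(1) munn[of y] by (intro mult_right_mono) auto
      then show ?thesis by (simp add: mult.commute)
    qed
    ultimately show ?case by simp
  qed
  moreover have "r0/2 > 0" using r unfolding r0_def by simp
  ultimately show ?thesis by blast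
qed


lemma path_bound:
  assumes "(y,z) \<in> (rate_graph (limit_rates R))\<^sup>*"
  shows "\<exists>c>0. eventually (\<lambda>N. mu N z \<ge> c * mu N y) sequentially"
  using assms
proof (induction rule: rtrancl_induct)
  case base
  show ?case by (intro exI[of _ 1]) simp
next
  case (step z w)
  obtain c1 where c1: "c1 > 0" "eventually (\<lambda>N. mu N z \<ge> c1 * mu N y) sequentially" using step.IH by blast
  obtain c2 where c2: "c2 > 0" "eventually (\<lambda>N. mu N w \<ge> c2 * mu N z) sequentially" using edge_bound[OF step.hyps(2)] by blast
  have "eventually (\<lambda>N. mu N w \<ge> (c2 * c1) * mu N y) sequentially"
    using c1(2) c2(2)
  proof eventually_elim
    case (elim N)
    have "(c2 * c1) * mu N y = c2 * (c1 * mu N y)" by simp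
    also have "\<dots> \<le> c2 * mu N z" using elim c2(1) by (intro mult_left_mono) auto
    also have "\<dots> \<le> mu N w" using elim by simp
    finally show ?case .
  qed
  then show ?case using c1(1) c2(1) by (intro exI[of _ "c2*c1"]) simp
qed

definition BT :: "'a \<Rightarrow> ('a \<Rightarrow> 'a) set" where
  "BT x = {f \<in> trees x. \<forall>a. a \<noteq> x \<longrightarrow> (a, f a) \<in> bonds R}"

definition kf :: "'a \<Rightarrow> ('a \<Rightarrow> 'a) \<Rightarrow> ('a \<times> 'a \<Rightarrow> nat)" where
  "kf x f = (\<lambda>p. if fst p \<noteq> x \<and> f (fst p) = snd p then 1 else 0)"

lemma kf_set: "f \<in> BT x \<Longrightarrow> {p \<in> bonds R. fst p \<noteq> x \<and> f (fst p) = snd p} = (\<lambda>a. (a, f a)) ` (UNIV - {x})"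
  unfolding BT_def by auto

lemma inj_graph: "inj_on (\<lambda>a. (a, f a)) S"
  by (rule inj_onI) simp

lemma weight_Mon:
  assumes f: "f \<in> BT x"
  shows "(\<Prod>a\<in>UNIV-{x}. R N a (f a)) = Mon (kf x f) N"
proof -
  have "Mon (kf x f) N = (\<Prod>p\<in>bonds R. if fst p \<noteq> x \<and> f (fst p) = snd p then R N (fst p) (snd p) else 1)"
    unfolding Mon_def kf_def by (rule prod.cong) auto
  also have "\<dots> = (\<Prod>p\<in>{p \<in> bonds R. fst p \<noteq> x \<and> f (fst p) = snd p}. R N (fst p) (snd p))"
    by (rule prod.inter_filter[symmetric]) simp
  also have "\<dots> = (\<Prod>p\<in>(\<lambda>a. (a, f a)) ` (UNIV - {x}). R N (fst p) (snd p))"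
    using kf_set[OF f] by simp
  also have "\<dots> = (\<Prod>a\<in>UNIV-{x}. R N a (f a))"
    by (subst prod.reindex[OF inj_graph]) simp
  finally show ?thesis by simp
qed

lemma kf_K:
  assumes f: "f \<in> BT x"
  shows "kf x f \<in> Kset (CARD('a) - 1)"
proof -
  have "(\<Sum>p\<in>bonds R. kf x f p) = (\<Sum>p\<in>{p \<in> bonds R. fst p \<noteq> x \<and> f (fst p) = snd p}. 1)"
    unfolding kf_def by (rule sum.inter_filter[symmetric]) simp
  also have "\<dots> = card ((\<lambda>a. (a, f a)) ` (UNIV - {x}))" using kf_set[OF f] by simp
  also have "\<dots> = CARD('a) - 1" by (simp add: card_image[OF inj_graph] card_Diff_singleton)
  finally have s: "(\<Sum>p\<in>bonds R. kf x f p) = CARD('a) - 1" .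
  have "kf x f p = 0" if "p \<notin> bonds R" for p
  proof -
    have "\<not> (fst p \<noteq> x \<and> f (fst p) = snd p)"
    proof
      assume h: "fst p \<noteq> x \<and> f (fst p) = snd p"
      then have "(fst p, f (fst p)) \<in> bonds R" using f unfolding BT_def by blast
      then show False using h that by (metis prod.collapse)
    qed
    then show ?thesis unfolding kf_def by simp
  qed
  then show ?thesis using s unfolding Kset_def by blast
qed

lemma tw_BT:
  assumes N: "N \<ge> 1"
  shows "tw (R N) x = (\<Sum>f\<in>BT x. Mon (kf x f) N)"
proof -
  have "tw (R N) x = (\<Sum>f\<in>BT x. \<Prod>a\<in>UNIV-{x}. R N a (f a))"
    unfolding tw_def
  proof (rule sum.mono_neutral_right)
    show "BT x \<subseteq> trees x" unfolding BT_def by auto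
    show "\<forall>f\<in>trees x - BT x. (\<Prod>a\<in>UNIV-{x}. R N a (f a)) = 0"
    proof
      fix f assume f: "f \<in> trees x - BT x"
      then obtain a where a: "a \<noteq> x" "(a, f a) \<notin> bonds R" unfolding BT_def by blast
      have "f a \<noteq> a" using tree_fix[of f x a] f a by auto
      then have "R N a (f a) = 0" using nonbond_zero[OF N _ a(2)] by simp
      then show "(\<Prod>a\<in>UNIV-{x}. R N a (f a)) = 0" using a by (intro prod_zero) auto
    qed
  qed simp
  also have "\<dots> = (\<Sum>f\<in>BT x. Mon (kf x f) N)" by (rule sum.cong) (simp_all add: weight_Mon)
  finally show ?thesis .
qed

lemma Mon_pos: "N \<ge> 1 \<Longrightarrow> Mon k N > 0"
  unfolding Mon_def
proof (intro prod_pos ballI)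
  fix p assume "N \<ge> 1" "p \<in> bonds R"
  then have "R N (fst p) (snd p) > 0" using bond_pos[of N "fst p" "snd p"] by simp
  then show "R N (fst p) (snd p) ^ k p > 0" by (rule zero_less_power)
qed

lemma BT_ne: "BT x \<noteq> {}"
proof -
  have "\<forall>a. (a,x) \<in> (bonds R)\<^sup>*"
    using irred[of 1] unfolding irreducible_rates_def rate_graph_def bonds_def by simp
  from tree_exists[OF this] show ?thesis unfolding BT_def by blast
qed

lemma tw_pos: "N \<ge> 1 \<Longrightarrow> tw (R N) x > 0"
  using BT_ne[of x] by (simp add: tw_BT Mon_pos sum_pos)

lemma tw_nonneg: "N \<ge> 1 \<Longrightarrow> tw (R N) x \<ge> 0"
  using tw_pos[of N x] by simp

lemma mu_ratio:
  assumes N: "N \<ge> 1"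
  shows "mu N \<eta> / mu N \<xi> = tw (R N) \<eta> / tw (R N) \<xi>" and "mu N x > 0"
proof -
  have nn: "\<And>u v. u \<noteq> v \<Longrightarrow> R N u v \<ge> 0" using nonneg[OF N] .
  have bal: "balanced (R N) (tw (R N))" unfolding balanced_def using tree_balance by blast
  show "mu N \<eta> / mu N \<xi> = tw (R N) \<eta> / tw (R N) \<xi>"
    by (rule ratio_eq(1)[OF nn irred[OF N] inv[OF N] tw_nonneg[OF N] bal tw_pos[OF N]])
  show "mu N x > 0"
    using ratio_eq(2)[OF nn irred[OF N] inv[OF N] tw_nonneg[OF N] bal tw_pos[OF N]] by blast
qed

end

theorem mainTheorem13:
  fixes R :: "nat \<Rightarrow> 'a::finite \<Rightarrow> 'a \<Rightarrow> real"
    and mu :: "nat \<Rightarrow> 'a \<Rightarrow> real"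
    and C :: "'a set"
  assumes nonneg: "\<And>N x y. N \<ge> 1 \<Longrightarrow> x \<noteq> y \<Longrightarrow> R N x y \<ge> 0"
    and irred: "\<And>N. N \<ge> 1 \<Longrightarrow> irreducible_rates (R N)"
    and inv: "\<And>N. N \<ge> 1 \<Longrightarrow> invariant_prob (R N) (mu N)"
    and A: "assumption_A R"
    and cls: "communicating_class (limit_rates R) C"
    and "\<eta> \<in> C" and "\<xi> \<in> C" and "\<eta> \<noteq> \<xi>"
  shows "\<exists>m. 0 < m \<and> (\<lambda>N. mu N \<eta> / mu N \<xi>) \<longlonglongrightarrow> m"
proof -
  note ctx = nonneg irred inv A
  define G where "G = rate_graph (limit_rates R)"
  obtain x0 where C: "C = {y. communicate (limit_rates R) x0 y}" using cls unfolding communicating_class_def by blast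
  have p1: "(\<xi>, \<eta>) \<in> G\<^sup>*" and p2: "(\<eta>, \<xi>) \<in> G\<^sup>*"
    using assms(6,7) unfolding C communicate_def G_def by (auto intro: rtrancl_trans)
  define P where "P N = (\<Sum>f\<in>BT R \<eta>. Mon R (kf \<eta> f) N)" for N
  define Q where "Q N = (\<Sum>f\<in>BT R \<xi>. Mon R (kf \<xi> f) N)" for N
  have PQ: "P N = tw (R N) \<eta>" "Q N = tw (R N) \<xi>" if "N \<ge> 1" for N
    unfolding P_def Q_def using tw_BT[OF ctx that] by simp_all
  have card2: "CARD('a) \<ge> 2"
  proof -
    have "card {\<eta>, \<xi>} \<le> CARD('a)" by (rule card_mono) auto
    then show ?thesis using assms(8) by simp
  qed
  have ord: "ordered_family (Kset R (CARD('a) - 1)) (Mon R)"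
  proof (rule ordK[OF ctx])
    show "1 \<le> CARD('a) - 1" using card2 by linarith
  qed
  have bound: "\<exists>c>0. eventually (\<lambda>N. tw (R N) z \<ge> c * tw (R N) y) sequentially"
    if yz: "(y, z) \<in> G\<^sup>*" for y z
  proof -
    obtain c where c: "c > 0" "eventually (\<lambda>N. mu N z \<ge> c * mu N y) sequentially"
      using path_bound[OF ctx yz[unfolded G_def]] by blast
    have "eventually (\<lambda>N. tw (R N) z \<ge> c * tw (R N) y) sequentially"
      using c(2) ev_ge1
    proof eventually_elim
      case (elim N)
      have my: "mu N y > 0" using mu_ratio(2)[OF ctx elim(2)] by blast
      have ty: "tw (R N) y > 0" by (rule tw_pos[OF ctx elim(2)])
      have "c \<le> mu N z / mu N y" using elim(1) my by (simp add: pos_le_divide_eq)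
      also have "\<dots> = tw (R N) z / tw (R N) y" by (rule mu_ratio(1)[OF ctx elim(2)])
      finally show ?case using ty by (simp add: pos_le_divide_eq)
    qed
    then show ?thesis using c(1) by blast
  qed
  obtain c1 where c1: "c1 > 0" "eventually (\<lambda>N. tw (R N) \<eta> \<ge> c1 * tw (R N) \<xi>) sequentially"
    using bound[OF p1] by blast
  obtain c2 where c2: "c2 > 0" "eventually (\<lambda>N. tw (R N) \<xi> \<ge> c2 * tw (R N) \<eta>) sequentially"
    using bound[OF p2] by blast
  have b1: "eventually (\<lambda>N. P N \<ge> c1 * Q N) sequentially"
    using c1(2) ev_ge1 by eventually_elim (simp add: PQ)
  have b2: "eventually (\<lambda>N. Q N \<ge> c2 * P N) sequentially"
    using c2(2) ev_ge1 by eventually_elim (simp add: PQ)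
  have "\<exists>m>0. (\<lambda>N. P N / Q N) \<longlonglongrightarrow> m"
    unfolding P_def Q_def
  proof (rule ord_sum_limit[OF ord])
    show "kf \<eta> ` BT R \<eta> \<subseteq> Kset R (CARD('a) - 1)" using kf_K[OF ctx] by blast
    show "kf \<xi> ` BT R \<xi> \<subseteq> Kset R (CARD('a) - 1)" using kf_K[OF ctx] by blast
    show "BT R \<eta> \<noteq> {} \<or> BT R \<xi> \<noteq> {}" using BT_ne[OF ctx] by blast
    show "eventually (\<lambda>N. (\<Sum>f\<in>BT R \<eta>. Mon R (kf \<eta> f) N) \<ge> c1 * (\<Sum>f\<in>BT R \<xi>. Mon R (kf \<xi> f) N)) sequentially"
      using b1 unfolding P_def Q_def .
    show "eventually (\<lambda>N. (\<Sum>f\<in>BT R \<xi>. Mon R (kf \<xi> f) N) \<ge> c2 * (\<Sum>f\<in>BT R \<eta>. Mon R (kf \<eta> f) N)) sequentially"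
      using b2 unfolding P_def Q_def .
  qed (use c1 c2 in simp_all)
  then obtain m where m: "m > 0" "(\<lambda>N. P N / Q N) \<longlonglongrightarrow> m" by blast
  have "eventually (\<lambda>N. P N / Q N = mu N \<eta> / mu N \<xi>) sequentially"
    using ev_ge1 by eventually_elim (simp add: PQ mu_ratio(1)[OF ctx])
  then have "(\<lambda>N. mu N \<eta> / mu N \<xi>) \<longlonglongrightarrow> m" by (rule Lim_transform_eventually[OF m(2)])
  then show ?thesis using m(1) by blast
qed



end
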